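(* Let $n\ge 1$, $m\ge 0$ be integers and let non-negative integers $r_0,r_1,\dots,r_n$ satisfy $$r_n=0,\quad r_{n-1}=m,\quad r_\ell\ge 2r_{\ell+1}\ \text{ for } \ell=n-2,\dots,0.$$ Let $k\ge 2r_0+1$ (so $k\ge 2^n m+1$). Let $T$ be an $n$-simplex and define the subsets of $\mathbb T^n_k$: $$S_0(\texttt v)=D(\texttt v,r_0)\quad(\texttt v\in\Delta_0(T)),$$ $$S_\ell(f)=D(f,r_\ell)\setminus\Big[\bigcup_{i=0}^{\ell-1}\bigcup_{e\in\Delta_i(f)}D(e,r_i)\Big]\quad (f\in\Delta_\ell(T),\ \ell=1,\dots,n-1),$$ $$S_n(T)=\mathbb T^n_k\setminus\Big[\bigcup_{i=0}^{n-1}\bigcup_{f\in\Delta_i(T)}D(f,r_i)\Big].$$ Then the sets $S_\ell(f)$, $f\in\Delta_\ell(T)$, $\ell=0,\dots,n$, are pairwise disjoint and their union is $\mathbb T^n_k$. Consequently $$\mathbb P_k(T)=\bigoplus_{\ell=0}^n\bigoplus_{f\in\Delta_\ell(T)}\mathbb P_k(S_\ell(f))\quad\text{(direct sum)}.$$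
   Context: $T\subset\mathbb R^n$ is an $n$-simplex with vertices $\texttt v_0,\dots,\texttt v_n$ and barycentric coordinates $\lambda_0,\dots,\lambda_n$. $\mathbb N$ includes $0$. The simplicial lattice is $\mathbb T^n_k=\{\alpha=(\alpha_0,\dots,\alpha_n)\in\mathbb N^{n+1}:\sum_i\alpha_i=k\}$, and $\lambda^\alpha=\prod_i\lambda_i^{\alpha_i}$. For $S\subseteq\mathbb T^n_k$, $\mathbb P_k(S)=\mathrm{span}\{\lambda^\alpha:\alpha\in S\}$; $\mathbb P_k(T)$ is the space of polynomials of degree $\le k$ on $T$. $\Delta_\ell(T)$ is the set of $\ell$-dimensional sub-simplices (faces) of $T$; each $f\in\Delta_\ell(T)$ is identified with the set of indices of its vertices, $f\subseteq\{0,\dots,n\}$, $|f|=\ell+1$, and $f^*=\{0,\dots,n\}\setminus f$; a vertex $\texttt v_i$ is identified with $\{i\}$. For $\alpha\in\mathbb T^n_k$, $|\alpha_{f^*}|=\sum_{i\in f^*}\alpha_i$ (the distance $\mathrm{dist}(\alpha,f)$). The lattice tube of $f$ with radius $r$ is $D(f,r)=\{\alpha\in\mathbb T^n_k:|\alpha_{f^*}|\le r\}$. *)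

theory Defs
  imports "HOL-Analysis.Analysis"
begin

definition lattice :: "nat \<Rightarrow> nat \<Rightarrow> (nat \<Rightarrow> nat) set" where
  "lattice n k = {\<alpha>. (\<forall>i>n. \<alpha> i = 0) \<and> (\<Sum>i\<le>n. \<alpha> i) = k}"

text \<open>l-dimensional faces of T, identified with their vertex index sets.\<close>
definition faces :: "nat \<Rightarrow> nat \<Rightarrow> nat set set" where
  "faces n l = {f. f \<subseteq> {0..n} \<and> card f = l + 1}"

text \<open>|alpha_{f*}| = sum of alpha_i over i in f* = {0..n} - f.\<close>
definition fdist :: "nat \<Rightarrow> (nat \<Rightarrow> nat) \<Rightarrow> nat set \<Rightarrow> nat" where
  "fdist n \<alpha> f = (\<Sum>i\<in>{0..n} - f. \<alpha> i)"

definition tube :: "nat \<Rightarrow> nat \<Rightarrow> nat set \<Rightarrow> nat \<Rightarrow> (nat \<Rightarrow> nat) set" where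
  "tube n k f r = {\<alpha> \<in> lattice n k. fdist n \<alpha> f \<le> r}"

definition Sset :: "nat \<Rightarrow> nat \<Rightarrow> (nat \<Rightarrow> nat) \<Rightarrow> nat \<Rightarrow> nat set \<Rightarrow> (nat \<Rightarrow> nat) set" where
  "Sset n k r l f =
     (if l = 0 then tube n k f (r 0)
      else if l < n then tube n k f (r l) - (\<Union>i<l. \<Union>e\<in>{e. e \<subseteq> f \<and> card e = i + 1}. tube n k e (r i))
      else lattice n k - (\<Union>i<n. \<Union>g\<in>faces n i. tube n k g (r i)))"

definition bary :: "(nat \<Rightarrow> 'a::real_vector) \<Rightarrow> nat \<Rightarrow> nat \<Rightarrow> 'a \<Rightarrow> real" where
  "bary v n i x = (THE c. (\<forall>j>n. c j = 0) \<and> (\<Sum>j\<le>n. c j) = 1 \<and> (\<Sum>j\<le>n. c j *\<^sub>R v j) = x) i"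

definition lampow :: "(nat \<Rightarrow> 'a::real_vector) \<Rightarrow> nat \<Rightarrow> (nat \<Rightarrow> nat) \<Rightarrow> 'a \<Rightarrow> real" where
  "lampow v n \<alpha> x = (\<Prod>i\<le>n. bary v n i x ^ \<alpha> i)"

definition Pspan :: "(nat \<Rightarrow> 'a::real_vector) \<Rightarrow> nat \<Rightarrow> (nat \<Rightarrow> nat) set \<Rightarrow> ('a \<Rightarrow> real) set" where
  "Pspan v n S = {p. \<exists>c. p = (\<lambda>x. \<Sum>\<alpha>\<in>S. c \<alpha> * lampow v n \<alpha> x)}"

definition polys :: "nat \<Rightarrow> (real^'n \<Rightarrow> real) set" where
  "polys k = {p. \<exists>c. p = (\<lambda>x. \<Sum>\<beta>\<in>{\<beta>::'n \<Rightarrow> nat. sum \<beta> UNIV \<le> k}. c \<beta> * (\<Prod>i\<in>UNIV. (x $ i) ^ \<beta> i))}"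

definition is_direct_sum :: "'i set \<Rightarrow> ('i \<Rightarrow> ('a \<Rightarrow> real) set) \<Rightarrow> ('a \<Rightarrow> real) set \<Rightarrow> bool" where
  "is_direct_sum I W V \<longleftrightarrow>
     V = {p. \<exists>u. (\<forall>j\<in>I. u j \<in> W j) \<and> p = (\<lambda>x. \<Sum>j\<in>I. u j x)} \<and>
     (\<forall>u. (\<forall>j\<in>I. u j \<in> W j) \<and> (\<forall>x. (\<Sum>j\<in>I. u j x) = 0) \<longrightarrow> (\<forall>j\<in>I. u j = (\<lambda>x. 0)))"

end

theory Submission
  imports Defs
begin


definition lspan :: "'b set \<Rightarrow> ('b \<Rightarrow> 'a \<Rightarrow> real) \<Rightarrow> ('a \<Rightarrow> real) set" where
  "lspan B g = {p. \<exists>c. p = (\<lambda>x. \<Sum>b\<in>B. c b * g b x)}"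

lemma lspan_zero: "(\<lambda>x. 0) \<in> lspan B g"
  unfolding lspan_def by (rule CollectI, rule exI[of _ "\<lambda>_. 0"]) simp

lemma lspan_add:
  assumes "p \<in> lspan B g" "q \<in> lspan B g"
  shows "(\<lambda>x. p x + q x) \<in> lspan B g"
proof -
  obtain c d where "p = (\<lambda>x. \<Sum>b\<in>B. c b * g b x)" "q = (\<lambda>x. \<Sum>b\<in>B. d b * g b x)"
    using assms unfolding lspan_def by blast
  then show ?thesis unfolding lspan_def
    by (intro CollectI exI[of _ "\<lambda>b. c b + d b"]) (simp add: sum.distrib distrib_right)
qed

lemma lspan_scale:
  assumes "p \<in> lspan B g"
  shows "(\<lambda>x. a * p x) \<in> lspan B g"
proof -
  obtain c where "p = (\<lambda>x. \<Sum>b\<in>B. c b * g b x)"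
    using assms unfolding lspan_def by blast
  then show ?thesis unfolding lspan_def
    by (intro CollectI exI[of _ "\<lambda>b. a * c b"]) (simp add: sum_distrib_left mult.assoc)
qed

lemma lspan_gen:
  assumes "finite B" "b \<in> B"
  shows "g b \<in> lspan B g"
  unfolding lspan_def
proof (intro CollectI exI[of _ "\<lambda>b'. if b' = b then 1 else 0"])
  show "g b = (\<lambda>x. \<Sum>b'\<in>B. (if b' = b then 1 else 0) * g b' x)"
  proof
    fix x
    have "(\<Sum>b'\<in>B. (if b' = b then 1 else 0) * g b' x) = (\<Sum>b'\<in>B. if b' = b then g b' x else 0)"
      by (rule sum.cong) auto
    also have "\<dots> = g b x" using assms by (simp add: sum.delta')
    finally show "g b x = (\<Sum>b'\<in>B. (if b' = b then 1 else 0) * g b' x)" by simp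
  qed
qed

lemma lspan_sum:
  assumes "finite I" "\<And>i. i \<in> I \<Longrightarrow> p i \<in> lspan B g"
  shows "(\<lambda>x. \<Sum>i\<in>I. p i x) \<in> lspan B g"
  using assms
proof (induction I rule: finite_induct)
  case empty
  then show ?case using lspan_zero by simp
next
  case (insert a F)
  then show ?case using lspan_add[of "p a" B g "\<lambda>x. \<Sum>i\<in>F. p i x"] by simp
qed

lemma lspan_sub:
  assumes "\<And>b. b \<in> B \<Longrightarrow> g b \<in> lspan B' g'" "finite B"
  shows "lspan B g \<subseteq> lspan B' g'"
proof
  fix p assume "p \<in> lspan B g"
  then obtain c where p: "p = (\<lambda>x. \<Sum>b\<in>B. c b * g b x)" unfolding lspan_def by blast
  show "p \<in> lspan B' g'" unfolding p
    by (rule lspan_sum[OF assms(2)]) (rule lspan_scale[OF assms(1)])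
qed

lemma lspan_mul:
  assumes "finite B1" "finite B2"
    and "\<And>b b'. b \<in> B1 \<Longrightarrow> b' \<in> B2 \<Longrightarrow> (\<lambda>x. g b x * g b' x) \<in> lspan B3 g"
    and "p \<in> lspan B1 g" "q \<in> lspan B2 g"
  shows "(\<lambda>x. p x * q x) \<in> lspan B3 g"
proof -
  obtain c d where p: "p = (\<lambda>x. \<Sum>b\<in>B1. c b * g b x)" and q: "q = (\<lambda>x. \<Sum>b\<in>B2. d b * g b x)"
    using assms unfolding lspan_def by blast
  have "(\<lambda>x. p x * q x) = (\<lambda>x. \<Sum>b\<in>B1. \<Sum>b'\<in>B2. (c b * d b') * (g b x * g b' x))"
    unfolding p q by (simp add: sum_product mult_ac)
  also have "\<dots> \<in> lspan B3 g"
    by (intro lspan_sum assms lspan_scale)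
  finally show ?thesis .
qed

lemma lspan_pow:
  assumes mul: "\<And>d d' b b'. b \<in> B d \<Longrightarrow> b' \<in> B d' \<Longrightarrow> (\<lambda>x. g b x * g b' x) \<in> lspan (B (d + d')) g"
    and fin: "\<And>d. finite (B d)"
    and one: "(\<lambda>x. 1) \<in> lspan (B 0) g"
    and f: "f \<in> lspan (B 1) g"
  shows "(\<lambda>x. f x ^ e) \<in> lspan (B e) g"
proof (induction e)
  case 0
  then show ?case using one by simp
next
  case (Suc e)
  have "(\<lambda>x. f x * f x ^ e) \<in> lspan (B (1 + e)) g"
    by (rule lspan_mul[OF fin fin mul f Suc])
  then show ?case by simp
qed

lemma lspan_prod:
  assumes mul: "\<And>d d' b b'. b \<in> B d \<Longrightarrow> b' \<in> B d' \<Longrightarrow> (\<lambda>x. g b x * g b' x) \<in> lspan (B (d + d')) g"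
    and fin: "\<And>d. finite (B d)"
    and one: "(\<lambda>x. 1) \<in> lspan (B 0) g"
    and J: "finite J"
    and f: "\<And>j. j \<in> J \<Longrightarrow> f j \<in> lspan (B 1) g"
  shows "(\<lambda>x. \<Prod>j\<in>J. f j x ^ a j) \<in> lspan (B (\<Sum>j\<in>J. a j)) g"
  using J f
proof (induction J rule: finite_induct)
  case empty
  then show ?case using one by simp
next
  case (insert j F)
  have "(\<lambda>x. f j x ^ a j * (\<Prod>j\<in>F. f j x ^ a j)) \<in> lspan (B (a j + (\<Sum>j\<in>F. a j))) g"
    by (rule lspan_mul[OF fin fin mul lspan_pow[OF mul fin one]]) (use insert in auto)
  then show ?case using insert by simp
qed

definition mmono :: "('n \<Rightarrow> nat) \<Rightarrow> real^'n \<Rightarrow> real" where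
  "mmono \<beta> x = (\<Prod>i\<in>UNIV. (x $ i) ^ \<beta> i)"

definition Bp :: "nat \<Rightarrow> ('n::finite \<Rightarrow> nat) set" where
  "Bp d = {\<beta>. sum \<beta> UNIV \<le> d}"

lemma polys_lspan: "polys d = lspan (Bp d) mmono"
  unfolding polys_def lspan_def Bp_def mmono_def ..

lemma Pspan_lspan: "Pspan v n S = lspan S (lampow v n)"
  unfolding Pspan_def lspan_def ..

lemma finite_Bp: "finite (Bp d :: ('n::finite \<Rightarrow> nat) set)"
proof (rule finite_subset)
  show "Bp d \<subseteq> PiE (UNIV::'n set) (\<lambda>_. {..d})"
  proof
    fix \<beta> assume "\<beta> \<in> Bp d"
    then have s: "sum \<beta> UNIV \<le> d" unfolding Bp_def by simp
    have "\<beta> i \<le> d" for i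
      using member_le_sum[of i UNIV \<beta>] s by simp
    then show "\<beta> \<in> PiE UNIV (\<lambda>_. {..d})" unfolding PiE_UNIV_domain by simp
  qed
  show "finite (PiE (UNIV::'n set) (\<lambda>_. {..d}))" by (rule finite_PiE) auto
qed

lemma finite_lattice: "finite (lattice n d)"
proof (rule finite_subset)
  show "lattice n d \<subseteq> (\<lambda>f i. if i \<le> n then f i else 0) ` PiE {..n} (\<lambda>_. {..d})"
  proof
    fix \<alpha> assume a: "\<alpha> \<in> lattice n d"
    have z: "\<forall>i>n. \<alpha> i = 0" and s: "(\<Sum>i\<le>n. \<alpha> i) = d" using a unfolding lattice_def by auto
    have "\<alpha> = (\<lambda>i. if i \<le> n then restrict \<alpha> {..n} i else 0)"
    proof
      fix i show "\<alpha> i = (if i \<le> n then restrict \<alpha> {..n} i else 0)"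
        using z by (cases "i \<le> n") auto
    qed
    moreover have "restrict \<alpha> {..n} \<in> PiE {..n} (\<lambda>_. {..d})"
      unfolding restrict_PiE_iff
    proof
      fix i assume "i \<in> {..n}"
      then have "\<alpha> i \<le> (\<Sum>i\<le>n. \<alpha> i)" by (intro member_le_sum) auto
      then show "\<alpha> i \<in> {..d}" using s by simp
    qed
    ultimately show "\<alpha> \<in> (\<lambda>f i. if i \<le> n then f i else 0) ` PiE {..n} (\<lambda>_. {..d})" by blast
  qed
  show "finite ((\<lambda>f i. if i \<le> n then f i else 0) ` PiE {..n} (\<lambda>_. {..d}))"
    by (intro finite_imageI finite_PiE) auto
qed

lemma Bp_mul: "b \<in> Bp d \<Longrightarrow> b' \<in> Bp d' \<Longrightarrow> (\<lambda>x. mmono b x * mmono b' x) \<in> lspan (Bp (d + d')) mmono"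
proof -
  assume "b \<in> Bp d" "b' \<in> Bp d'"
  then have "(\<lambda>i. b i + b' i) \<in> Bp (d + d')" unfolding Bp_def by (simp add: sum.distrib)
  moreover have e: "(\<lambda>x. mmono b x * mmono b' x) = mmono (\<lambda>i. b i + b' i)"
    unfolding mmono_def by (simp add: power_add prod.distrib)
  ultimately show ?thesis using lspan_gen[OF finite_Bp] by (simp only: e)
qed

lemma Bp_one: "(\<lambda>x. 1) \<in> lspan (Bp 0) mmono"
proof -
  have e: "(\<lambda>x. 1) = mmono (\<lambda>_. 0)" unfolding mmono_def by simp
  moreover have "(\<lambda>_. 0) \<in> Bp 0" unfolding Bp_def by simp
  ultimately show ?thesis using lspan_gen[OF finite_Bp] by (simp only: e)
qed

lemma lat_mul: "b \<in> lattice n d \<Longrightarrow> b' \<in> lattice n d' \<Longrightarrow>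
   (\<lambda>x. lampow v n b x * lampow v n b' x) \<in> lspan (lattice n (d + d')) (lampow v n)"
proof -
  assume "b \<in> lattice n d" "b' \<in> lattice n d'"
  then have "(\<lambda>i. b i + b' i) \<in> lattice n (d + d')" unfolding lattice_def by (simp add: sum.distrib)
  moreover have e: "(\<lambda>x. lampow v n b x * lampow v n b' x) = lampow v n (\<lambda>i. b i + b' i)"
    unfolding lampow_def by (simp add: power_add prod.distrib)
  ultimately show ?thesis using lspan_gen[OF finite_lattice] by (simp only: e)
qed

lemma lat_one: "(\<lambda>x. 1) \<in> lspan (lattice n 0) (lampow v n)"
proof -
  have e: "(\<lambda>x. 1) = lampow v n (\<lambda>_. 0)" unfolding lampow_def by simp
  moreover have "(\<lambda>_. 0) \<in> lattice n 0" unfolding lattice_def by simp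
  ultimately show ?thesis using lspan_gen[OF finite_lattice] by (simp only: e)
qed


locale sx =
  fixes v :: "nat \<Rightarrow> real^'n" and n :: nat
  assumes inj: "inj_on v {..n}" and indep: "\<not> affine_dependent (v ` {..n})"
    and card: "CARD('n) = n"
begin

lemma uniq:
  assumes "(\<Sum>j\<le>n. a j) = 0" "(\<Sum>j\<le>n. a j *\<^sub>R v j) = 0" "j \<le> n"
  shows "a j = 0"
proof (rule ccontr)
  assume nz: "a j \<noteq> 0"
  let ?S = "v ` {..n}"
  let ?U = "\<lambda>w. a (inv_into {..n} v w)"
  have s1: "sum ?U ?S = (\<Sum>j\<le>n. a j)"
    using inj by (simp add: sum.reindex inv_into_f_f)
  have s2: "(\<Sum>w\<in>?S. ?U w *\<^sub>R w) = (\<Sum>j\<le>n. a j *\<^sub>R v j)"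
    using inj by (simp add: sum.reindex inv_into_f_f)
  have ex: "\<exists>w\<in>?S. ?U w \<noteq> 0"
    using nz assms(3) inj by (intro bexI[of _ "v j"]) (auto simp: inv_into_f_f)
  then have "affine_dependent ?S"
    unfolding affine_dependent_explicit_finite[OF finite_imageI[OF finite_atMost]]
    using s1 s2 assms(1,2) ex by (intro exI[of _ ?U] conjI) simp_all
  then show False using indep by blast
qed

lemma exist: "\<exists>c. (\<Sum>j\<le>n. c j) = 1 \<and> (\<Sum>j\<le>n. c j *\<^sub>R v j) = x"
proof -
  let ?S = "v ` {..n}"
  have "card ?S = n + 1" using inj by (simp add: card_image)
  then have "aff_dim ?S = int n" using aff_dim_affine_independent[OF indep] by simp
  then have "aff_dim ?S = DIM(real^'n)" using card by simp
  then have "affine hull ?S = UNIV" using aff_dim_eq_full by blast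
  then have "x \<in> affine hull ?S" by simp
  then obtain u where u: "sum u ?S = 1" "(\<Sum>w\<in>?S. u w *\<^sub>R w) = x"
    unfolding affine_hull_finite[OF finite_imageI[OF finite_atMost]] by blast
  show ?thesis
    using u inj by (intro exI[of _ "\<lambda>j. u (v j)"]) (simp add: sum.reindex)
qed

lemma bary_eq:
  assumes "\<forall>j>n. c j = 0" "(\<Sum>j\<le>n. c j) = 1" "(\<Sum>j\<le>n. c j *\<^sub>R v j) = x"
  shows "bary v n i x = c i"
proof -
  have "(THE c. (\<forall>j>n. c j = 0) \<and> (\<Sum>j\<le>n. c j) = 1 \<and> (\<Sum>j\<le>n. c j *\<^sub>R v j) = x) = c"
  proof (rule the_equality)
    show "(\<forall>j>n. c j = 0) \<and> (\<Sum>j\<le>n. c j) = 1 \<and> (\<Sum>j\<le>n. c j *\<^sub>R v j) = x" using assms by blast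
  next
    fix d assume d: "(\<forall>j>n. d j = 0) \<and> (\<Sum>j\<le>n. d j) = 1 \<and> (\<Sum>j\<le>n. d j *\<^sub>R v j) = x"
    show "d = c"
    proof
      fix j
      show "d j = c j"
      proof (cases "j \<le> n")
        case True
        have "(\<Sum>j\<le>n. d j - c j) = 0" using d assms by (simp add: sum_subtractf)
        moreover have "(\<Sum>j\<le>n. (d j - c j) *\<^sub>R v j) = 0"
          using d assms by (simp add: sum_subtractf scaleR_left_diff_distrib)
        ultimately have "d j - c j = 0" using uniq[of "\<lambda>j. d j - c j"] True by blast
        then show ?thesis by simp
      next
        case False
        then show ?thesis using d assms by simp
      qed
    qed
  qed
  then show ?thesis unfolding bary_def by simp
qed

lemma bary_props:
  shows "(\<Sum>j\<le>n. bary v n j x) = 1" "(\<Sum>j\<le>n. bary v n j x *\<^sub>R v j) = x" "j > n \<Longrightarrow> bary v n j x = 0"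
proof -
  obtain c where c: "(\<Sum>j\<le>n. c j) = 1" "(\<Sum>j\<le>n. c j *\<^sub>R v j) = x" using exist by blast
  define c' where "c' j = (if j \<le> n then c j else 0)" for j
  have c': "\<forall>j>n. c' j = 0" "(\<Sum>j\<le>n. c' j) = 1" "(\<Sum>j\<le>n. c' j *\<^sub>R v j) = x"
    using c unfolding c'_def by auto
  have b: "bary v n j x = c' j" for j by (rule bary_eq[OF c'])
  show "(\<Sum>j\<le>n. bary v n j x) = 1" "(\<Sum>j\<le>n. bary v n j x *\<^sub>R v j) = x" "j > n \<Longrightarrow> bary v n j x = 0"
    using c' by (simp_all add: b)
qed

end


context sx begin

lemma bary_affine:
  "bary v n i x = bary v n i 0 + (\<Sum>j\<in>UNIV. x $ j * (bary v n i (axis j 1) - bary v n i 0))"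
proof -
  define b0 where "b0 i = bary v n i 0" for i
  define be where "be j i = bary v n i (axis j 1)" for j i
  define c where "c i = b0 i + (\<Sum>j\<in>UNIV. x $ j * (be j i - b0 i))" for i
  have 1: "\<forall>i>n. c i = 0" unfolding c_def b0_def be_def using bary_props(3) by simp
  have s0: "(\<Sum>i\<le>n. b0 i) = 1" unfolding b0_def using bary_props(1) .
  have se: "(\<Sum>i\<le>n. be j i) = 1" for j unfolding be_def using bary_props(1) .
  have v0: "(\<Sum>i\<le>n. b0 i *\<^sub>R v i) = 0" unfolding b0_def using bary_props(2) .
  have ve: "(\<Sum>i\<le>n. be j i *\<^sub>R v i) = axis j 1" for j unfolding be_def using bary_props(2) .
  have "(\<Sum>i\<le>n. c i) = (\<Sum>i\<le>n. b0 i) + (\<Sum>i\<le>n. \<Sum>j\<in>UNIV. x $ j * (be j i - b0 i))"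
    unfolding c_def by (simp add: sum.distrib)
  also have "(\<Sum>i\<le>n. \<Sum>j\<in>UNIV. x $ j * (be j i - b0 i)) = (\<Sum>j\<in>UNIV. \<Sum>i\<le>n. x $ j * (be j i - b0 i))"
    by (rule sum.swap)
  also have "\<dots> = (\<Sum>j\<in>UNIV. x $ j * ((\<Sum>i\<le>n. be j i) - (\<Sum>i\<le>n. b0 i)))"
    by (simp add: sum_distrib_left sum_subtractf right_diff_distrib)
  also have "\<dots> = 0" using s0 se by simp
  finally have 2: "(\<Sum>i\<le>n. c i) = 1" using s0 by simp
  have "(\<Sum>i\<le>n. c i *\<^sub>R v i) = (\<Sum>i\<le>n. b0 i *\<^sub>R v i) + (\<Sum>i\<le>n. (\<Sum>j\<in>UNIV. x $ j * (be j i - b0 i)) *\<^sub>R v i)"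
    unfolding c_def by (simp add: sum.distrib scaleR_add_left)
  also have "(\<Sum>i\<le>n. (\<Sum>j\<in>UNIV. x $ j * (be j i - b0 i)) *\<^sub>R v i)
      = (\<Sum>i\<le>n. \<Sum>j\<in>UNIV. (x $ j * (be j i - b0 i)) *\<^sub>R v i)"
    by (simp add: scaleR_sum_left)
  also have "\<dots> = (\<Sum>j\<in>UNIV. \<Sum>i\<le>n. (x $ j * (be j i - b0 i)) *\<^sub>R v i)"
    by (rule sum.swap)
  also have "\<dots> = (\<Sum>j\<in>UNIV. x $ j *\<^sub>R ((\<Sum>i\<le>n. be j i *\<^sub>R v i) - (\<Sum>i\<le>n. b0 i *\<^sub>R v i)))"
  proof (rule sum.cong[OF refl])
    fix j
    have "(\<Sum>i\<le>n. (x $ j * (be j i - b0 i)) *\<^sub>R v i) = x $ j *\<^sub>R (\<Sum>i\<le>n. (be j i - b0 i) *\<^sub>R v i)"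
      by (simp add: scaleR_right.sum)
    also have "\<dots> = x $ j *\<^sub>R ((\<Sum>i\<le>n. be j i *\<^sub>R v i) - (\<Sum>i\<le>n. b0 i *\<^sub>R v i))"
      by (simp add: scaleR_left_diff_distrib sum_subtractf)
    finally show "(\<Sum>i\<le>n. (x $ j * (be j i - b0 i)) *\<^sub>R v i) = x $ j *\<^sub>R ((\<Sum>i\<le>n. be j i *\<^sub>R v i) - (\<Sum>i\<le>n. b0 i *\<^sub>R v i))" .
  qed
  also have "\<dots> = (\<Sum>j\<in>UNIV. x $ j *\<^sub>R axis j 1)" using ve v0 by simp
  also have "\<dots> = x" using basis_expansion[of x] by (simp add: scalar_mult_eq_scaleR)
  finally have 3: "(\<Sum>i\<le>n. c i *\<^sub>R v i) = x" using v0 by simp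
  have "bary v n i x = c i" by (rule bary_eq[OF 1 2 3])
  then show ?thesis unfolding c_def b0_def be_def .
qed

lemma const_polys: "(\<lambda>x. a) \<in> lspan (Bp d) mmono"
proof -
  have "(\<lambda>x. a * mmono (\<lambda>_. 0) x) \<in> lspan (Bp d) mmono"
    by (rule lspan_scale, rule lspan_gen[OF finite_Bp]) (simp add: Bp_def)
  then show ?thesis by (simp add: mmono_def)
qed

lemma coord_polys: "(\<lambda>x::real^'n. x $ j) \<in> lspan (Bp 1) mmono"
proof -
  have e: "(\<lambda>x::real^'n. x $ j) = mmono (\<lambda>i. if i = j then 1 else 0)"
  proof
    fix x :: "real^'n"
    have "(\<Prod>i\<in>UNIV. x$i ^ (if i = j then 1 else 0)) = (\<Prod>i\<in>UNIV. if i = j then x$i else 1)"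
      by (rule prod.cong) auto
    also have "\<dots> = x $ j" by (simp add: prod.delta)
    finally show "x $ j = mmono (\<lambda>i. if i = j then 1 else 0) x" unfolding mmono_def by simp
  qed
  have "(\<lambda>i. if i = j then 1 else 0) \<in> Bp 1" by (simp add: Bp_def)
  then show ?thesis unfolding e by (intro lspan_gen finite_Bp)
qed

lemma bary_polys: "bary v n i \<in> lspan (Bp 1) mmono"
proof -
  have "(\<lambda>x. bary v n i 0 + (\<Sum>j\<in>UNIV. x $ j * (bary v n i (axis j 1) - bary v n i 0))) \<in> lspan (Bp 1) mmono"
  proof (rule lspan_add[OF const_polys], rule lspan_sum)
    fix j
    have e: "(\<lambda>x::real^'n. x $ j * (bary v n i (axis j 1) - bary v n i 0)) = (\<lambda>x. (bary v n i (axis j 1) - bary v n i 0) * x $ j)"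
      by (simp add: mult.commute)
    show "(\<lambda>x::real^'n. x $ j * (bary v n i (axis j 1) - bary v n i 0)) \<in> lspan (Bp 1) mmono"
      unfolding e by (rule lspan_scale[OF coord_polys])
  qed simp
  moreover have "bary v n i = (\<lambda>x. bary v n i 0 + (\<Sum>j\<in>UNIV. x $ j * (bary v n i (axis j 1) - bary v n i 0)))"
    by (rule ext) (rule bary_affine)
  ultimately show ?thesis by simp
qed

lemma lattice_polys: "\<alpha> \<in> lattice n k \<Longrightarrow> lampow v n \<alpha> \<in> lspan (Bp k) mmono"
proof -
  assume a: "\<alpha> \<in> lattice n k"
  have "(\<lambda>x. \<Prod>j\<in>{..n}. bary v n j x ^ \<alpha> j) \<in> lspan (Bp (\<Sum>j\<in>{..n}. \<alpha> j)) mmono"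
  proof (rule lspan_prod[OF Bp_mul finite_Bp Bp_one])
    fix j show "bary v n j \<in> lspan (Bp 1) mmono" by (rule bary_polys)
  next
    show "finite {..n}" by simp
  qed
  then show ?thesis using a unfolding lattice_def lampow_def by (simp add: fun_eq_iff)
qed

end


context sx begin

lemma bary_lat1: "i \<le> n \<Longrightarrow> bary v n i \<in> lspan (lattice n 1) (lampow v n)"
proof -
  assume i: "i \<le> n"
  let ?e = "\<lambda>i'. if i' = i then 1 else (0::nat)"
  have e: "bary v n i = lampow v n ?e"
  proof
    fix x
    have "(\<Prod>i'\<le>n. bary v n i' x ^ ?e i') = (\<Prod>i'\<le>n. if i' = i then bary v n i' x else 1)"
      by (rule prod.cong) auto
    also have "\<dots> = bary v n i x" using i by (simp add: prod.delta)
    finally show "bary v n i x = lampow v n ?e x" unfolding lampow_def by simp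
  qed
  have "?e \<in> lattice n 1" using i unfolding lattice_def by (simp add: sum.delta)
  then show ?thesis unfolding e by (rule lspan_gen[OF finite_lattice])
qed

lemma coord_lat: "(\<lambda>x::real^'n. x $ j) \<in> lspan (lattice n 1) (lampow v n)"
proof -
  have "(\<lambda>x. \<Sum>i\<in>{..n}. (v i $ j) * bary v n i x) \<in> lspan (lattice n 1) (lampow v n)"
  proof (rule lspan_sum)
    fix i assume "i \<in> {..n}"
    then show "(\<lambda>x. (v i $ j) * bary v n i x) \<in> lspan (lattice n 1) (lampow v n)"
      by (intro lspan_scale[OF bary_lat1]) simp
  qed simp
  moreover have "(\<lambda>x::real^'n. x $ j) = (\<lambda>x. \<Sum>i\<in>{..n}. (v i $ j) * bary v n i x)"
  proof
    fix x :: "real^'n"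
    have "x $ j = (\<Sum>i\<le>n. bary v n i x *\<^sub>R v i) $ j" using bary_props(2)[of x] by simp
    also have "\<dots> = (\<Sum>i\<le>n. (v i $ j) * bary v n i x)" by (simp add: mult.commute)
    finally show "x $ j = (\<Sum>i\<in>{..n}. (v i $ j) * bary v n i x)" by simp
  qed
  ultimately show ?thesis by simp
qed

lemma one_lat1: "(\<lambda>x. 1) \<in> lspan (lattice n 1) (lampow v n)"
proof -
  have "(\<lambda>x. \<Sum>i\<in>{..n}. bary v n i x) \<in> lspan (lattice n 1) (lampow v n)"
  proof (rule lspan_sum)
    fix i assume "i \<in> {..n}"
    then show "bary v n i \<in> lspan (lattice n 1) (lampow v n)" by (intro bary_lat1) simp
  qed simp
  moreover have "(\<lambda>x. \<Sum>i\<in>{..n}. bary v n i x) = (\<lambda>x. 1)"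
    using bary_props(1) by simp
  ultimately show ?thesis by simp
qed

lemma mono_lat: "\<beta> \<in> Bp k \<Longrightarrow> mmono \<beta> \<in> lspan (lattice n k) (lampow v n)"
proof -
  assume b: "\<beta> \<in> Bp k"
  have m: "(\<lambda>x. \<Prod>j\<in>UNIV. (x $ j) ^ \<beta> j) \<in> lspan (lattice n (\<Sum>j\<in>UNIV. \<beta> j)) (lampow v n)"
  proof (rule lspan_prod[OF lat_mul finite_lattice lat_one])
    fix j :: 'n show "(\<lambda>x::real^'n. x $ j) \<in> lspan (lattice n 1) (lampow v n)" by (rule coord_lat)
  next
    show "finite (UNIV :: 'n set)" by simp
  qed
  have o: "(\<lambda>x. 1 ^ (k - sum \<beta> UNIV)) \<in> lspan (lattice n (k - sum \<beta> UNIV)) (lampow v n)"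
    by (rule lspan_pow[OF lat_mul finite_lattice lat_one one_lat1])
  have "(\<lambda>x. (\<Prod>j\<in>UNIV. (x $ j) ^ \<beta> j) * 1 ^ (k - sum \<beta> UNIV))
     \<in> lspan (lattice n (sum \<beta> UNIV + (k - sum \<beta> UNIV))) (lampow v n)"
    by (rule lspan_mul[OF finite_lattice finite_lattice lat_mul m o])
  moreover have "sum \<beta> UNIV + (k - sum \<beta> UNIV) = k" using b unfolding Bp_def by simp
  ultimately show ?thesis unfolding mmono_def by simp
qed

lemma polys_eq_lat: "lspan (Bp k) mmono = lspan (lattice n k) (lampow v n)"
proof
  show "lspan (Bp k) mmono \<subseteq> lspan (lattice n k) (lampow v n)"
    by (rule lspan_sub[OF mono_lat finite_Bp])
  show "lspan (lattice n k) (lampow v n) \<subseteq> lspan (Bp k) mmono"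
    by (rule lspan_sub[OF lattice_polys finite_lattice])
qed

end


lemma univ_zero:
  fixes a :: "nat \<Rightarrow> real"
  assumes "\<forall>t. t \<noteq> tz \<longrightarrow> (\<Sum>d\<le>D. a d * t ^ d) = 0" "d \<le> D"
  shows "a d = 0"
proof (rule ccontr)
  assume "a d \<noteq> 0"
  then have "finite {t. (\<Sum>d\<le>D. a d * t ^ d) = 0}"
    using polyfun_roots_finite[of a d D] assms(2) by blast
  moreover have "UNIV - {tz} \<subseteq> {t. (\<Sum>d\<le>D. a d * t ^ d) = 0}" using assms(1) by auto
  ultimately have "finite (UNIV - {tz} :: real set)" by (rule finite_subset[rotated])
  then have "finite (UNIV :: real set)" by simp
  then show False using infinite_UNIV_char_0 by blast
qed

lemma group_last:
  fixes y :: "nat \<Rightarrow> real"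
  assumes "finite A" "\<forall>\<alpha>\<in>A. \<alpha> N \<le> D"
  shows "(\<Sum>\<alpha>\<in>A. c \<alpha> * (\<Prod>i<Suc N. y i ^ \<alpha> i))
       = (\<Sum>d\<le>D. (\<Sum>\<alpha>\<in>{\<alpha>\<in>A. \<alpha> N = d}. c \<alpha> * (\<Prod>i<N. y i ^ \<alpha> i)) * y N ^ d)"
proof -
  have "(\<Sum>d\<le>D. (\<Sum>\<alpha>\<in>{\<alpha>\<in>A. \<alpha> N = d}. c \<alpha> * (\<Prod>i<N. y i ^ \<alpha> i)) * y N ^ d)
      = (\<Sum>d\<le>D. (\<Sum>\<alpha>\<in>{\<alpha>\<in>A. \<alpha> N = d}. c \<alpha> * (\<Prod>i<Suc N. y i ^ \<alpha> i)))"
    by (rule sum.cong[OF refl]) (auto simp: sum_distrib_right mult.assoc intro!: sum.cong)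
  also have "\<dots> = (\<Sum>\<alpha>\<in>A. c \<alpha> * (\<Prod>i<Suc N. y i ^ \<alpha> i))"
    by (rule sum.group) (use assms in auto)
  finally show ?thesis by simp
qed

lemma coef_upd:
  fixes y :: "nat \<Rightarrow> real"
  shows "(\<Prod>i<N. (y(N := t)) i ^ \<alpha> i) = (\<Prod>i<N. y i ^ \<alpha> i)"
  by (rule prod.cong) auto

lemma polyZ:
  fixes c :: "(nat \<Rightarrow> nat) \<Rightarrow> real"
  assumes "finite A" "\<forall>\<alpha>\<in>A. \<forall>\<beta>\<in>A. (\<forall>i<N. \<alpha> i = \<beta> i) \<longrightarrow> \<alpha> = \<beta>"
    and "\<forall>y::nat \<Rightarrow> real. (\<Sum>\<alpha>\<in>A. c \<alpha> * (\<Prod>i<N. y i ^ \<alpha> i)) = 0" "\<alpha> \<in> A"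
  shows "c \<alpha> = 0"
  using assms
proof (induction N arbitrary: A \<alpha>)
  case 0
  then have "A = {\<alpha>}" by auto
  then show ?case using 0 by simp
next
  case (Suc N)
  define D where "D = Max ((\<lambda>\<alpha>. \<alpha> N) ` A)"
  have D: "\<forall>\<alpha>\<in>A. \<alpha> N \<le> D" unfolding D_def using Suc.prems(1) by auto
  have coef: "(\<Sum>\<beta>\<in>{\<beta>\<in>A. \<beta> N = d}. c \<beta> * (\<Prod>i<N. y i ^ \<beta> i)) = 0" if "d \<le> D" for d y
  proof -
    have "\<forall>t. t \<noteq> 0 \<longrightarrow> (\<Sum>d\<le>D. (\<Sum>\<beta>\<in>{\<beta>\<in>A. \<beta> N = d}. c \<beta> * (\<Prod>i<N. y i ^ \<beta> i)) * t ^ d) = 0"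
    proof (intro allI impI)
      fix t :: real
      have "(\<Sum>\<beta>\<in>A. c \<beta> * (\<Prod>i<Suc N. (y(N := t)) i ^ \<beta> i)) = 0" using Suc.prems(3) by blast
      then show "(\<Sum>d\<le>D. (\<Sum>\<beta>\<in>{\<beta>\<in>A. \<beta> N = d}. c \<beta> * (\<Prod>i<N. y i ^ \<beta> i)) * t ^ d) = 0"
        unfolding group_last[OF Suc.prems(1) D] coef_upd by simp
    qed
    then show ?thesis
      using univ_zero[where a="\<lambda>d. (\<Sum>\<beta>\<in>{\<beta>\<in>A. \<beta> N = d}. c \<beta> * (\<Prod>i<N. y i ^ \<beta> i))" and tz=0, OF _ that] by blast
  qed
  show ?case
  proof (rule Suc.IH[of "{\<beta>\<in>A. \<beta> N = \<alpha> N}"])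
    show "finite {\<beta>\<in>A. \<beta> N = \<alpha> N}" using Suc.prems(1) by simp
    show "\<forall>\<beta>\<in>{\<beta>\<in>A. \<beta> N = \<alpha> N}. \<forall>\<gamma>\<in>{\<beta>\<in>A. \<beta> N = \<alpha> N}. (\<forall>i<N. \<beta> i = \<gamma> i) \<longrightarrow> \<beta> = \<gamma>"
      using Suc.prems(2) by (auto simp: less_Suc_eq)
    show "\<forall>y. (\<Sum>\<beta>\<in>{\<beta>\<in>A. \<beta> N = \<alpha> N}. c \<beta> * (\<Prod>i<N. y i ^ \<beta> i)) = 0"
      using coef D Suc.prems(4) by blast
    show "\<alpha> \<in> {\<beta>\<in>A. \<beta> N = \<alpha> N}" using Suc.prems(4) by simp
  qed
qed

lemma polyZ':
  fixes c :: "(nat \<Rightarrow> nat) \<Rightarrow> real"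
  assumes "finite A" "\<forall>\<alpha>\<in>A. \<forall>\<beta>\<in>A. (\<forall>i<Suc N. \<alpha> i = \<beta> i) \<longrightarrow> \<alpha> = \<beta>"
    and "\<forall>y::nat \<Rightarrow> real. (\<Sum>i<Suc N. y i) \<noteq> 0 \<longrightarrow> (\<Sum>\<alpha>\<in>A. c \<alpha> * (\<Prod>i<Suc N. y i ^ \<alpha> i)) = 0" "\<alpha> \<in> A"
  shows "c \<alpha> = 0"
proof -
  define D where "D = Max ((\<lambda>\<alpha>. \<alpha> N) ` A)"
  have D: "\<forall>\<alpha>\<in>A. \<alpha> N \<le> D" unfolding D_def using assms(1) by auto
  have coef: "(\<Sum>\<beta>\<in>{\<beta>\<in>A. \<beta> N = d}. c \<beta> * (\<Prod>i<N. y i ^ \<beta> i)) = 0" if "d \<le> D" for d y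
  proof -
    have "\<forall>t. t \<noteq> - (\<Sum>i<N. y i) \<longrightarrow> (\<Sum>d\<le>D. (\<Sum>\<beta>\<in>{\<beta>\<in>A. \<beta> N = d}. c \<beta> * (\<Prod>i<N. y i ^ \<beta> i)) * t ^ d) = 0"
    proof (intro allI impI)
      fix t :: real
      assume t: "t \<noteq> - (\<Sum>i<N. y i)"
      have "(\<Sum>i<Suc N. (y(N := t)) i) = (\<Sum>i<N. y i) + t" by simp
      then have "(\<Sum>i<Suc N. (y(N := t)) i) \<noteq> 0" using t by linarith
      then have "(\<Sum>\<beta>\<in>A. c \<beta> * (\<Prod>i<Suc N. (y(N := t)) i ^ \<beta> i)) = 0" using assms(3) by blast
      then show "(\<Sum>d\<le>D. (\<Sum>\<beta>\<in>{\<beta>\<in>A. \<beta> N = d}. c \<beta> * (\<Prod>i<N. y i ^ \<beta> i)) * t ^ d) = 0"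
        unfolding group_last[OF assms(1) D] coef_upd by simp
    qed
    then show ?thesis
      using univ_zero[where a="\<lambda>d. (\<Sum>\<beta>\<in>{\<beta>\<in>A. \<beta> N = d}. c \<beta> * (\<Prod>i<N. y i ^ \<beta> i))", OF _ that] by blast
  qed
  show ?thesis
  proof (rule polyZ[where A="{\<beta>\<in>A. \<beta> N = \<alpha> N}" and N=N and c=c])
    show "finite {\<beta>\<in>A. \<beta> N = \<alpha> N}" using assms(1) by simp
    show "\<forall>\<beta>\<in>{\<beta>\<in>A. \<beta> N = \<alpha> N}. \<forall>\<gamma>\<in>{\<beta>\<in>A. \<beta> N = \<alpha> N}. (\<forall>i<N. \<beta> i = \<gamma> i) \<longrightarrow> \<beta> = \<gamma>"
      using assms(2) by (auto simp: less_Suc_eq)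
    show "\<forall>y. (\<Sum>\<beta>\<in>{\<beta>\<in>A. \<beta> N = \<alpha> N}. c \<beta> * (\<Prod>i<N. y i ^ \<beta> i)) = 0"
      using coef D assms(4) by blast
    show "\<alpha> \<in> {\<beta>\<in>A. \<beta> N = \<alpha> N}" using assms(4) by simp
  qed
qed


context sx begin

lemma lattice_indep:
  assumes H: "\<forall>x. (\<Sum>\<alpha>\<in>lattice n k. C \<alpha> * lampow v n \<alpha> x) = 0" and a: "\<alpha> \<in> lattice n k"
  shows "C \<alpha> = 0"
proof (rule polyZ'[where A="lattice n k" and N=n and c=C])
  show "finite (lattice n k)" by (rule finite_lattice)
  show "\<alpha> \<in> lattice n k" by (rule a)
  show "\<forall>\<alpha>\<in>lattice n k. \<forall>\<beta>\<in>lattice n k. (\<forall>i<Suc n. \<alpha> i = \<beta> i) \<longrightarrow> \<alpha> = \<beta>"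
  proof (intro ballI impI ext)
    fix \<alpha> \<beta> i assume "\<alpha> \<in> lattice n k" "\<beta> \<in> lattice n k" "\<forall>i<Suc n. \<alpha> i = \<beta> i"
    then show "\<alpha> i = \<beta> i" unfolding lattice_def by (cases "i \<le> n") auto
  qed
  show "\<forall>y::nat\<Rightarrow>real. (\<Sum>i<Suc n. y i) \<noteq> 0 \<longrightarrow> (\<Sum>\<alpha>\<in>lattice n k. C \<alpha> * (\<Prod>i<Suc n. y i ^ \<alpha> i)) = 0"
  proof (intro allI impI)
    fix y :: "nat \<Rightarrow> real"
    define s where "s = (\<Sum>i\<le>n. y i)"
    assume "(\<Sum>i<Suc n. y i) \<noteq> 0"
    then have s0: "s \<noteq> 0" unfolding s_def by (simp add: lessThan_Suc_atMost)
    define \<mu> where "\<mu> i = (if i \<le> n then y i / s else 0)" for i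
    have m1: "\<forall>j>n. \<mu> j = 0" unfolding \<mu>_def by simp
    have "(\<Sum>j\<le>n. \<mu> j) = (\<Sum>j\<le>n. y j / s)" unfolding \<mu>_def by simp
    also have "\<dots> = 1" using s0 unfolding s_def by (simp add: sum_divide_distrib[symmetric])
    finally have m2: "(\<Sum>j\<le>n. \<mu> j) = 1" .
    define x where "x = (\<Sum>j\<le>n. \<mu> j *\<^sub>R v j)"
    have bx: "bary v n i x = \<mu> i" for i by (rule bary_eq[OF m1 m2 x_def[symmetric]])
    have trm: "(\<Prod>i<Suc n. y i ^ \<beta> i) = s ^ k * lampow v n \<beta> x" if b: "\<beta> \<in> lattice n k" for \<beta>
    proof -
      have "(\<Prod>i<Suc n. y i ^ \<beta> i) = (\<Prod>i\<le>n. (s * \<mu> i) ^ \<beta> i)"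
        unfolding lessThan_Suc_atMost by (rule prod.cong) (auto simp: \<mu>_def s0)
      also have "\<dots> = (\<Prod>i\<le>n. s ^ \<beta> i) * (\<Prod>i\<le>n. \<mu> i ^ \<beta> i)"
        by (simp add: power_mult_distrib prod.distrib)
      also have "(\<Prod>i\<le>n. s ^ \<beta> i) = s ^ k"
        using b unfolding lattice_def by (simp add: power_sum[symmetric])
      also have "(\<Prod>i\<le>n. \<mu> i ^ \<beta> i) = lampow v n \<beta> x"
        unfolding lampow_def bx ..
      finally show ?thesis .
    qed
    have "(\<Sum>\<alpha>\<in>lattice n k. C \<alpha> * (\<Prod>i<Suc n. y i ^ \<alpha> i))
        = (\<Sum>\<alpha>\<in>lattice n k. s ^ k * (C \<alpha> * lampow v n \<alpha> x))"
    proof (rule sum.cong[OF refl])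
      fix \<alpha> assume "\<alpha> \<in> lattice n k"
      then show "C \<alpha> * (\<Prod>i<Suc n. y i ^ \<alpha> i) = s ^ k * (C \<alpha> * lampow v n \<alpha> x)"
        by (simp only: trm mult_ac)
    qed
    also have "\<dots> = s ^ k * (\<Sum>\<alpha>\<in>lattice n k. C \<alpha> * lampow v n \<alpha> x)"
      by (simp add: sum_distrib_left)
    also have "\<dots> = 0" using H by simp
    finally show "(\<Sum>\<alpha>\<in>lattice n k. C \<alpha> * (\<Prod>i<Suc n. y i ^ \<alpha> i)) = 0" .
  qed
qed

end


lemma fdist_inter:
  "fdist n \<alpha> (f \<inter> g) \<le> fdist n \<alpha> f + fdist n \<alpha> g"
proof -
  have e: "{0..n} - (f \<inter> g) = ({0..n} - f) \<union> ({0..n} - g)" by auto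
  have "sum \<alpha> (({0..n} - f) \<union> ({0..n} - g)) + sum \<alpha> (({0..n} - f) \<inter> ({0..n} - g))
      = sum \<alpha> ({0..n} - f) + sum \<alpha> ({0..n} - g)"
    by (rule sum.union_inter) auto
  then show ?thesis unfolding fdist_def e by linarith
qed

lemma fdist_empty: "\<alpha> \<in> lattice n k \<Longrightarrow> fdist n \<alpha> {} = k"
  unfolding fdist_def lattice_def by (simp add: atLeast0AtMost)

lemma fdist_full: "fdist n \<alpha> {0..n} = 0"
  unfolding fdist_def by simp

lemma faces_D: "f \<in> faces n l \<Longrightarrow> f \<subseteq> {0..n} \<and> finite f \<and> card f = l + 1"
  unfolding faces_def using finite_subset by auto

lemma faces_n:
  assumes "f \<in> faces n n" shows "f = {0..n}"
proof -
  have "f \<subseteq> {0..n}" "card f = card {0..n}" using assms unfolding faces_def by auto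
  then show ?thesis using card_subset_eq[of "{0..n}" f] by simp
qed

locale rad =
  fixes n k :: nat and r :: "nat \<Rightarrow> nat"
  assumes n1: "n \<ge> 1" and rn: "r n = 0" and rdec: "\<forall>l. l + 2 \<le> n \<longrightarrow> r l \<ge> 2 * r (l + 1)"
    and kbig: "k \<ge> 2 * r 0 + 1"
begin

lemma rstep: "l < n \<Longrightarrow> r (Suc l) \<le> r l"
proof -
  assume l: "l < n"
  show ?thesis
  proof (cases "l + 2 \<le> n")
    case True then show ?thesis using rdec by fastforce
  next
    case False then have "Suc l = n" using l by simp
    then show ?thesis using rn by simp
  qed
qed

lemma rmono: "i \<le> j \<Longrightarrow> j \<le> n \<Longrightarrow> r j \<le> r i"
proof (induction j)
  case 0 then show ?case by simp
next
  case (Suc j)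
  show ?case
  proof (cases "i = Suc j")
    case True then show ?thesis by simp
  next
    case False
    then have "i \<le> j" using Suc.prems by simp
    then show ?thesis using Suc rstep[of j] by simp
  qed
qed

lemma r2: "1 \<le> l \<Longrightarrow> l < n \<Longrightarrow> 2 * r l \<le> r (l - 1)"
  using rdec[rule_format, of "l - 1"] by simp

abbreviation "I \<equiv> {(l, f). l \<le> n \<and> f \<in> faces n l}"

lemma Sset_iff:
  assumes "l \<le> n" "f \<in> faces n l"
  shows "\<alpha> \<in> Sset n k r l f \<longleftrightarrow>
    \<alpha> \<in> tube n k f (r l) \<and> (\<forall>i<l. \<forall>e. e \<subseteq> f \<and> card e = i + 1 \<longrightarrow> \<alpha> \<notin> tube n k e (r i))"
proof (cases "l < n")
  case True
  then show ?thesis unfolding Sset_def by auto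
next
  case False
  then have l: "l = n" using assms by simp
  then have f: "f = {0..n}" using assms faces_n by simp
  have "l \<noteq> 0" using l n1 by simp
  then show ?thesis unfolding Sset_def using l f
    by (auto simp: tube_def fdist_full faces_def)
qed

lemma Sset_sub: "Sset n k r l f \<subseteq> lattice n k"
  unfolding Sset_def tube_def by auto

lemma disj_aux:
  assumes "l \<le> l'" "(l, f) \<in> I" "(l', f') \<in> I" "(l, f) \<noteq> (l', f')"
    and a: "\<alpha> \<in> Sset n k r l f" and a': "\<alpha> \<in> Sset n k r l' f'"
  shows False
proof -
  have l': "l' \<le> n" and F': "f' \<in> faces n l'" using assms by auto
  have l: "l \<le> n" and F: "f \<in> faces n l" using assms by auto
  note fd = faces_D[OF F] and fd' = faces_D[OF F']
  have A: "\<alpha> \<in> tube n k f (r l)" "\<forall>i<l. \<forall>e. e \<subseteq> f \<and> card e = i + 1 \<longrightarrow> \<alpha> \<notin> tube n k e (r i)"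
    using a Sset_iff[OF l F] by auto
  have A': "\<alpha> \<in> tube n k f' (r l')" "\<forall>i<l'. \<forall>e. e \<subseteq> f' \<and> card e = i + 1 \<longrightarrow> \<alpha> \<notin> tube n k e (r i)"
    using a' Sset_iff[OF l' F'] by auto
  have lat: "\<alpha> \<in> lattice n k" and d: "fdist n \<alpha> f \<le> r l" and d': "fdist n \<alpha> f' \<le> r l'"
    using A(1) A'(1) unfolding tube_def by auto
  have rl: "r l' \<le> r l" using rmono assms(1) l' by simp
  show False
  proof (cases "f \<subseteq> f'")
    case True
    show False
    proof (cases "l = l'")
      case True
      then have "f = f'" using \<open>f \<subseteq> f'\<close> fd fd' card_subset_eq[of f' f] by simp
      then show False using assms(4) True by simp
    next
      case False
      then have "l < l'" using assms(1) by simp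
      then show False using A'(2) A(1) \<open>f \<subseteq> f'\<close> fd by blast
    qed
  next
    case False
    let ?e = "f \<inter> f'"
    have de: "fdist n \<alpha> ?e \<le> 2 * r l" using fdist_inter[of n \<alpha> f f'] d d' rl by simp
    have "?e \<subset> f" using False by auto
    then have ce: "card ?e < l + 1" using fd psubset_card_mono by metis
    have ln: "l < n"
    proof (rule ccontr)
      assume "\<not> l < n"
      then have "l' = n" "l = n" using assms(1) l' by auto
      then have "f' = {0..n}" using F' faces_n by simp
      then show False using False fd by simp
    qed
    have r0: "r l \<le> r 0" using rmono ln by simp
    show False
    proof (cases "?e = {}")
      case True
      then have "k \<le> 2 * r l" using de fdist_empty[OF lat] by simp
      then show False using kbig r0 by simp
    next
      case False
      then have "card ?e \<ge> 1" using fd by (simp add: card_gt_0_iff Suc_le_eq)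
      then obtain i where i: "card ?e = i + 1" by (metis le_add_diff_inverse2)
      then have il: "i < l" using ce by simp
      then have "1 \<le> l" by simp
      then have "2 * r l \<le> r (l - 1)" using r2 ln by simp
      moreover have "r (l - 1) \<le> r i" using rmono il ln by simp
      ultimately have "\<alpha> \<in> tube n k ?e (r i)" using de lat unfolding tube_def by simp
      then show False using A(2) il i by blast
    qed
  qed
qed

lemma disjoint:
  assumes "(l, f) \<in> I" "(l', f') \<in> I" "(l, f) \<noteq> (l', f')"
  shows "Sset n k r l f \<inter> Sset n k r l' f' = {}"
proof (rule ccontr)
  assume "Sset n k r l f \<inter> Sset n k r l' f' \<noteq> {}"
  then obtain \<alpha> where "\<alpha> \<in> Sset n k r l f" "\<alpha> \<in> Sset n k r l' f'" by blast
  then show False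
    using disj_aux[OF _ assms] disj_aux[OF _ assms(2,1)] assms(3) by (cases "l \<le> l'") auto
qed

lemma covers: "(\<Union>(l, f) \<in> I. Sset n k r l f) = lattice n k"
proof
  show "(\<Union>(l, f) \<in> I. Sset n k r l f) \<subseteq> lattice n k" using Sset_sub by blast
next
  show "lattice n k \<subseteq> (\<Union>(l, f) \<in> I. Sset n k r l f)"
  proof
    fix \<alpha> assume lat: "\<alpha> \<in> lattice n k"
    let ?P = "\<lambda>l. \<exists>f. f \<in> faces n l \<and> \<alpha> \<in> tube n k f (r l)"
    have full: "{0..n} \<in> faces n n" unfolding faces_def by simp
    have Pn: "?P n" using lat full unfolding tube_def by (auto simp: fdist_full)
    define l0 where "l0 = (LEAST l. ?P l)"
    have P0: "?P l0" unfolding l0_def by (rule LeastI[where P="?P" and k=n]) (rule Pn)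
    have l0n: "l0 \<le> n" unfolding l0_def by (rule Least_le[where P="?P" and k=n]) (rule Pn)
    obtain f where f: "f \<in> faces n l0" "\<alpha> \<in> tube n k f (r l0)" using P0 by blast
    have "\<alpha> \<in> Sset n k r l0 f"
      unfolding Sset_iff[OF l0n f(1)]
    proof (intro conjI allI impI f(2))
      fix i e assume i: "i < l0" and e: "e \<subseteq> f \<and> card e = i + 1"
      have "e \<in> faces n i" using e faces_D[OF f(1)] unfolding faces_def by auto
      moreover have "\<not> ?P i" using not_less_Least[where P="?P" and k=i] i unfolding l0_def by blast
      ultimately show "\<alpha> \<notin> tube n k e (r i)" by blast
    qed
    then show "\<alpha> \<in> (\<Union>(l, f) \<in> I. Sset n k r l f)" using l0n f(1) by blast
  qed
qed

end


theorem mainTheorem1: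
  fixes n m k :: nat and r :: "nat \<Rightarrow> nat" and v :: "nat \<Rightarrow> real^'n"
  assumes "n \<ge> 1"
    and "CARD('n) = n"
    and "inj_on v {0..n}" and "\<not> affine_dependent (v ` {0..n})"
    and "r n = 0" and "r (n - 1) = m"
    and "\<forall>l. l + 2 \<le> n \<longrightarrow> r l \<ge> 2 * r (l + 1)"
    and "k \<ge> 2 * r 0 + 1"
  shows "(\<forall>(l, f) \<in> {(l, f). l \<le> n \<and> f \<in> faces n l}. \<forall>(l', f') \<in> {(l, f). l \<le> n \<and> f \<in> faces n l}.
            (l, f) \<noteq> (l', f') \<longrightarrow> Sset n k r l f \<inter> Sset n k r l' f' = {})
       \<and> (\<Union>(l, f) \<in> {(l, f). l \<le> n \<and> f \<in> faces n l}. Sset n k r l f) = lattice n k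
       \<and> is_direct_sum {(l, f). l \<le> n \<and> f \<in> faces n l} (\<lambda>(l, f). Pspan v n (Sset n k r l f)) (polys k)"
proof -
  interpret sx v n
    using assms(2,3,4) by unfold_locales (simp_all add: atLeast0AtMost)
  interpret rad n k r
    using assms(1,5,7,8) by unfold_locales auto
  let ?I = "{(l, f). l \<le> n \<and> f \<in> faces n l}"
  define S where "S = (\<lambda>(l, f). Sset n k r l f)"
  have W: "(\<lambda>(l, f). Pspan v n (Sset n k r l f)) = (\<lambda>j. lspan (S j) (lampow v n))"
    unfolding S_def by (auto simp: Pspan_lspan)
  have P1: "\<forall>(l, f) \<in> ?I. \<forall>(l', f') \<in> ?I. (l, f) \<noteq> (l', f') \<longrightarrow> Sset n k r l f \<inter> Sset n k r l' f' = {}"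
    using disjoint by fastforce
  have P2: "(\<Union>(l, f) \<in> ?I. Sset n k r l f) = lattice n k" by (rule covers)
  have finI: "finite ?I"
  proof (rule finite_subset)
    show "?I \<subseteq> {..n} \<times> Pow {0..n}" unfolding faces_def by auto
  qed simp
  have Ssub: "S j \<subseteq> lattice n k" for j unfolding S_def using Sset_sub by (auto split: prod.splits)
  have Sfin: "finite (S j)" for j using finite_subset[OF Ssub finite_lattice] .
  have Sdisj: "\<forall>i\<in>?I. \<forall>j\<in>?I. i \<noteq> j \<longrightarrow> S i \<inter> S j = {}"
    using P1 unfolding S_def by fastforce
  have Sun: "(\<Union>j\<in>?I. S j) = lattice n k" using P2 unfolding S_def by simp
  have polys_eq: "(polys k :: (real^'n \<Rightarrow> real) set) = lspan (lattice n k) (lampow v n)"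
    unfolding polys_lspan by (rule polys_eq_lat)
  have D1: "(polys k :: (real^'n \<Rightarrow> real) set) = {p. \<exists>u. (\<forall>j\<in>?I. u j \<in> lspan (S j) (lampow v n)) \<and> p = (\<lambda>x. \<Sum>j\<in>?I. u j x)}"
  proof
    show "polys k \<subseteq> {p. \<exists>u. (\<forall>j\<in>?I. u j \<in> lspan (S j) (lampow v n)) \<and> p = (\<lambda>x. \<Sum>j\<in>?I. u j x)}"
    proof
      fix p :: "real^'n \<Rightarrow> real" assume "p \<in> polys k"
      then obtain c where p: "p = (\<lambda>x. \<Sum>\<alpha>\<in>lattice n k. c \<alpha> * lampow v n \<alpha> x)"
        unfolding polys_eq lspan_def by blast
      define u where "u j = (\<lambda>x. \<Sum>\<alpha>\<in>S j. c \<alpha> * lampow v n \<alpha> x)" for j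
      have "\<forall>j\<in>?I. u j \<in> lspan (S j) (lampow v n)" unfolding u_def lspan_def by blast
      moreover have "p = (\<lambda>x. \<Sum>j\<in>?I. u j x)"
      proof
        fix x
        have "p x = (\<Sum>\<alpha>\<in>(\<Union>j\<in>?I. S j). c \<alpha> * lampow v n \<alpha> x)" unfolding p Sun ..
        also have "\<dots> = (\<Sum>j\<in>?I. \<Sum>\<alpha>\<in>S j. c \<alpha> * lampow v n \<alpha> x)"
          by (rule sum.UNION_disjoint[OF finI]) (use Sfin Sdisj in auto)
        finally show "p x = (\<Sum>j\<in>?I. u j x)" unfolding u_def .
      qed
      ultimately show "p \<in> {p. \<exists>u. (\<forall>j\<in>?I. u j \<in> lspan (S j) (lampow v n)) \<and> p = (\<lambda>x. \<Sum>j\<in>?I. u j x)}"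
        by blast
    qed
  next
    show "{p. \<exists>u. (\<forall>j\<in>?I. u j \<in> lspan (S j) (lampow v n)) \<and> p = (\<lambda>x. \<Sum>j\<in>?I. u j x)} \<subseteq> polys k"
    proof
      fix p assume "p \<in> {p. \<exists>u. (\<forall>j\<in>?I. u j \<in> lspan (S j) (lampow v n)) \<and> p = (\<lambda>x. \<Sum>j\<in>?I. u j x)}"
      then obtain u where u: "\<forall>j\<in>?I. u j \<in> lspan (S j) (lampow v n)" and p: "p = (\<lambda>x. \<Sum>j\<in>?I. u j x)"
        by blast
      have "\<forall>j\<in>?I. u j \<in> lspan (lattice n k) (lampow v n)"
      proof
        fix j assume "j \<in> ?I"
        have "lspan (S j) (lampow v n) \<subseteq> lspan (lattice n k) (lampow v n)"
        proof (rule lspan_sub[OF _ Sfin])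
          fix b assume "b \<in> S j"
          then show "lampow v n b \<in> lspan (lattice n k) (lampow v n)"
            using Ssub by (intro lspan_gen[OF finite_lattice]) blast
        qed
        then show "u j \<in> lspan (lattice n k) (lampow v n)" using u \<open>j \<in> ?I\<close> by blast
      qed
      then have "p \<in> lspan (lattice n k) (lampow v n)" unfolding p
        by (intro lspan_sum[OF finI]) blast
      then show "p \<in> polys k" unfolding polys_eq .
    qed
  qed
  have D2: "\<forall>u. (\<forall>j\<in>?I. u j \<in> lspan (S j) (lampow v n)) \<and> (\<forall>x. (\<Sum>j\<in>?I. u j x) = 0) \<longrightarrow> (\<forall>j\<in>?I. u j = (\<lambda>x. 0))"
  proof (intro allI impI)
    fix u assume u: "(\<forall>j\<in>?I. u j \<in> lspan (S j) (lampow v n)) \<and> (\<forall>x. (\<Sum>j\<in>?I. u j x) = 0)"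
    then have "\<forall>j\<in>?I. \<exists>c. u j = (\<lambda>x. \<Sum>\<alpha>\<in>S j. c \<alpha> * lampow v n \<alpha> x)" unfolding lspan_def by blast
    then obtain cc where cc: "\<forall>j\<in>?I. u j = (\<lambda>x. \<Sum>\<alpha>\<in>S j. cc j \<alpha> * lampow v n \<alpha> x)"
      by (metis (no_types) bchoice)
    define C where "C \<alpha> = (\<Sum>j\<in>?I. if \<alpha> \<in> S j then cc j \<alpha> else 0)" for \<alpha>
    have sumC: "(\<Sum>\<alpha>\<in>lattice n k. C \<alpha> * lampow v n \<alpha> x) = 0" for x
    proof -
      have "(\<Sum>\<alpha>\<in>lattice n k. C \<alpha> * lampow v n \<alpha> x)
          = (\<Sum>\<alpha>\<in>lattice n k. \<Sum>j\<in>?I. (if \<alpha> \<in> S j then cc j \<alpha> * lampow v n \<alpha> x else 0))"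
        unfolding C_def sum_distrib_right by (intro sum.cong refl) simp
      also have "\<dots> = (\<Sum>j\<in>?I. \<Sum>\<alpha>\<in>lattice n k. (if \<alpha> \<in> S j then cc j \<alpha> * lampow v n \<alpha> x else 0))"
        by (rule sum.swap)
      also have "\<dots> = (\<Sum>j\<in>?I. \<Sum>\<alpha>\<in>S j. cc j \<alpha> * lampow v n \<alpha> x)"
      proof (rule sum.cong[OF refl])
        fix j
        have "(\<Sum>\<alpha>\<in>lattice n k. (if \<alpha> \<in> S j then cc j \<alpha> * lampow v n \<alpha> x else 0))
            = (\<Sum>\<alpha>\<in>lattice n k \<inter> S j. cc j \<alpha> * lampow v n \<alpha> x)"
          by (rule sum.inter_restrict[OF finite_lattice, where g="\<lambda>\<alpha>. cc j \<alpha> * lampow v n \<alpha> x", symmetric])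
        also have "lattice n k \<inter> S j = S j" using Ssub by blast
        finally show "(\<Sum>\<alpha>\<in>lattice n k. (if \<alpha> \<in> S j then cc j \<alpha> * lampow v n \<alpha> x else 0))
            = (\<Sum>\<alpha>\<in>S j. cc j \<alpha> * lampow v n \<alpha> x)" .
      qed
      also have "\<dots> = (\<Sum>j\<in>?I. u j x)"
      proof (rule sum.cong[OF refl])
        fix j assume "j \<in> ?I"
        then have "u j = (\<lambda>x. \<Sum>\<alpha>\<in>S j. cc j \<alpha> * lampow v n \<alpha> x)" using cc by blast
        then show "(\<Sum>\<alpha>\<in>S j. cc j \<alpha> * lampow v n \<alpha> x) = u j x" by simp
      qed
      also have "\<dots> = 0" using u by blast
      finally show ?thesis .
    qed
    have C0: "C \<alpha> = 0" if "\<alpha> \<in> lattice n k" for \<alpha>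
      using lattice_indep[of C k \<alpha>] sumC that by blast
    show "\<forall>j\<in>?I. u j = (\<lambda>x. 0)"
    proof
      fix j assume j: "j \<in> ?I"
      have "cc j \<alpha> = 0" if a: "\<alpha> \<in> S j" for \<alpha>
      proof -
        have "C \<alpha> = (\<Sum>j'\<in>?I. if j' = j then cc j \<alpha> else 0)"
          unfolding C_def
        proof (rule sum.cong[OF refl])
          fix j' assume j': "j' \<in> ?I"
          show "(if \<alpha> \<in> S j' then cc j' \<alpha> else 0) = (if j' = j then cc j \<alpha> else 0)"
          proof (cases "j' = j")
            case True then show ?thesis using a by simp
          next
            case False
            then have "S j' \<inter> S j = {}" using Sdisj j j' by blast
            then have "\<alpha> \<notin> S j'" using a by blast
            then show ?thesis using False by simp
          qed
        qed
        also have "\<dots> = cc j \<alpha>" using j finI by (simp add: sum.delta)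
        moreover have "\<alpha> \<in> lattice n k" using a Ssub[of j] by blast
        ultimately show ?thesis using C0 by simp
      qed
      moreover have "u j = (\<lambda>x. \<Sum>\<alpha>\<in>S j. cc j \<alpha> * lampow v n \<alpha> x)" using cc j by blast
      ultimately show "u j = (\<lambda>x. 0)" by simp
    qed
  qed
  show ?thesis
    unfolding is_direct_sum_def W
    using P1 P2 D1 D2 by blast
qed

end
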